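(* Let $r\geqslant 2$ and let $\mathcal{G}$ be a Newton graph of order $r$ on the torus $T$, with vertices $v_1,\dots,v_r$, faces $F_{r+1},\dots,F_{r+r}$, and edges $e_1,\dots,e_{2r}$. Let $\mathcal{G}^{*}$ be a geometric dual of $\mathcal{G}$, with vertex $v^{*}_{r+i}$ lying in $F_{r+i}$ and edge $e_k^{*}$ the dual edge crossing $e_k$. Put $\delta_i=\deg(v_i)$ and $\delta_i^{*}=\deg(v^{*}_{r+i})$, $i=1,\dots,r$. Then $$1<\delta_i\leqslant 2r,\qquad 1<\delta^{*}_i\leqslant 2r\quad (i=1,\dots,r),\qquad \sum_{i=1}^{r}\delta_i=\sum_{i=1}^{r}\delta^{*}_i=4r.$$ Moreover, the common refinement $\mathcal{G}\wedge\mathcal{G}^{*}$ has precisely $4r$ faces, and no vertex $s_k$ of $\mathcal{G}\wedge\mathcal{G}^{*}$ is connected by two edges of $\mathcal{G}\wedge\mathcal{G}^{*}$ to the same vertex $v_i$ or to the same vertex $v^{*}_{r+i}$.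
   Context: All graphs are cellular embeddings in the torus $T$ (each face homeomorphic to an open disk) of connected abstract multigraphs without loops, having $r$ vertices, $2r$ edges and hence $r$ faces; $r$ is the order. Such a graph has the E(Euler)-property if the boundary of each face, as a subgraph, is Eulerian: it admits a closed facial walk traversing each of its edges exactly once and passing through all its vertices (equivalently, every edge lies on the boundaries of two different faces, each traversed once). It has the A(angle)-property if to every sector of a face at a vertex on its boundary one can assign a well-defined strictly positive angle such that these angles sum up to $2\pi$ (around each vertex, and over the sectors of each face). A Newton graph is such a graph having both the A-property and the E-property. The geometric dual $\mathcal{G}^{*}$ has one vertex in each face of $\mathcal{G}$ and one edge $e_k^{*}$ crossing each edge $e_k$ of $\mathcal{G}$ exactly once; $\mathcal{G}^{*}$ is again a Newton graph of order $r$. The common refinement $\mathcal{G}\wedge\mathcal{G}^{*}$ is the embedded graph whose vertices are the vertices $v_i$ of $\mathcal{G}$, the crossing points $s_k$ of $e_k$ and $e_k^{*}$ ($k=1,\dots,2r$), and the vertices $v^{*}_{r+i}$ of $\mathcal{G}^{*}$; each $e_k$ (resp. $e_k^{*}$) is split into two edges of $\mathcal{G}\wedge\mathcal{G}^{*}$ joining $s_k$ to the two end vertices of $e_k$ (resp. $e_k^{*}$), and there are no other edges. *)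

theory Defs
  imports Complex_Main
begin

text \<open>
Combinatorial encoding of a cellular embedding of a connected loopless multigraph in
the (orientable) torus: an oriented combinatorial map (rotation system) on a finite
set of darts D (half-edges).  alpha is the fixed-point-free involution pairing the
two darts of an edge, sigma the counterclockwise rotation of darts around their
vertex.  Vertices, edges and faces are the orbits of sigma, alpha and sigma o alpha.
Faces are traversed keeping the face on the right.  The dart c also names the
sector (corner) at its vertex between c and sigma c; this sector lies in the face
containing alpha c.
\<close>

definition orb :: "('a \<Rightarrow> 'a) \<Rightarrow> 'a \<Rightarrow> 'a set" where
  "orb f x = range (\<lambda>n. (f ^^ n) x)"

definition cells :: "'a set \<Rightarrow> ('a \<Rightarrow> 'a) \<Rightarrow> 'a set set" where
  "cells D f = orb f ` D"

definition face_perm :: "('a \<Rightarrow> 'a) \<Rightarrow> ('a \<Rightarrow> 'a) \<Rightarrow> 'a \<Rightarrow> 'a" where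
  "face_perm \<alpha> \<sigma> = \<sigma> \<circ> \<alpha>"

definition map_connected :: "'a set \<Rightarrow> ('a \<Rightarrow> 'a) \<Rightarrow> ('a \<Rightarrow> 'a) \<Rightarrow> bool" where
  "map_connected D \<alpha> \<sigma> \<longleftrightarrow>
     (\<forall>x\<in>D. \<forall>y\<in>D. (x, y) \<in> ({(z, \<alpha> z) | z. z \<in> D} \<union> {(z, \<sigma> z) | z. z \<in> D})\<^sup>*)"

definition torus_map :: "'a set \<Rightarrow> ('a \<Rightarrow> 'a) \<Rightarrow> ('a \<Rightarrow> 'a) \<Rightarrow> bool" where
  "torus_map D \<alpha> \<sigma> \<longleftrightarrow>
     finite D \<and> D \<noteq> {} \<and>
     (\<forall>d\<in>D. \<alpha> d \<in> D \<and> \<alpha> (\<alpha> d) = d \<and> \<alpha> d \<noteq> d) \<and>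
     bij_betw \<sigma> D D \<and>
     map_connected D \<alpha> \<sigma> \<and>
     int (card (cells D \<sigma>)) - int (card (cells D \<alpha>)) + int (card (cells D (face_perm \<alpha> \<sigma>))) = 0"

definition no_loops :: "'a set \<Rightarrow> ('a \<Rightarrow> 'a) \<Rightarrow> ('a \<Rightarrow> 'a) \<Rightarrow> bool" where
  "no_loops D \<alpha> \<sigma> \<longleftrightarrow> (\<forall>d\<in>D. \<alpha> d \<notin> orb \<sigma> d)"

definition E_property :: "'a set \<Rightarrow> ('a \<Rightarrow> 'a) \<Rightarrow> ('a \<Rightarrow> 'a) \<Rightarrow> bool" where
  "E_property D \<alpha> \<sigma> \<longleftrightarrow> (\<forall>d\<in>D. orb (face_perm \<alpha> \<sigma>) (\<alpha> d) \<noteq> orb (face_perm \<alpha> \<sigma>) d)"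

definition A_property :: "'a set \<Rightarrow> ('a \<Rightarrow> 'a) \<Rightarrow> ('a \<Rightarrow> 'a) \<Rightarrow> bool" where
  "A_property D \<alpha> \<sigma> \<longleftrightarrow>
     (\<exists>\<theta> :: 'a \<Rightarrow> real.
        (\<forall>c\<in>D. 0 < \<theta> c) \<and>
        (\<forall>v\<in>cells D \<sigma>. (\<Sum>c\<in>v. \<theta> c) = 2 * pi) \<and>
        (\<forall>F\<in>cells D (face_perm \<alpha> \<sigma>). (\<Sum>c\<in>{c\<in>D. \<alpha> c \<in> F}. \<theta> c) = 2 * pi))"

definition newton_graph :: "'a set \<Rightarrow> ('a \<Rightarrow> 'a) \<Rightarrow> ('a \<Rightarrow> 'a) \<Rightarrow> nat \<Rightarrow> bool" where
  "newton_graph D \<alpha> \<sigma> r \<longleftrightarrow>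
     torus_map D \<alpha> \<sigma> \<and> no_loops D \<alpha> \<sigma> \<and>
     card (cells D \<sigma>) = r \<and> card (cells D \<alpha>) = 2 * r \<and>
     E_property D \<alpha> \<sigma> \<and> A_property D \<alpha> \<sigma>"

text \<open>Geometric dual: same darts and edge involution; the dual vertex in a face
  has counterclockwise rotation the inverse of the face permutation.\<close>
definition dual_rot :: "'a set \<Rightarrow> ('a \<Rightarrow> 'a) \<Rightarrow> ('a \<Rightarrow> 'a) \<Rightarrow> 'a \<Rightarrow> 'a" where
  "dual_rot D \<alpha> \<sigma> = inv_into D (face_perm \<alpha> \<sigma>)"

text \<open>For each dart d (at vertex v, edge e) there are
  four darts: (d,0) = half of e at v, (d,1) = the same segment at s_e,
  (d,2) = the segment of e* from the face containing d, at that dual vertex,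
  (d,3) = the same segment at s_e.\<close>
definition ref_darts :: "'a set \<Rightarrow> ('a \<times> nat) set" where
  "ref_darts D = D \<times> {0, 1, 2, 3}"

definition ref_alpha :: "'a \<times> nat \<Rightarrow> 'a \<times> nat" where
  "ref_alpha x = (case x of (d, k) \<Rightarrow>
     if k = 0 then (d, 1) else if k = 1 then (d, 0) else if k = 2 then (d, 3) else (d, 2))"

definition ref_sigma :: "'a set \<Rightarrow> ('a \<Rightarrow> 'a) \<Rightarrow> ('a \<Rightarrow> 'a) \<Rightarrow> 'a \<times> nat \<Rightarrow> 'a \<times> nat" where
  "ref_sigma D \<alpha> \<sigma> x = (case x of (d, k) \<Rightarrow>
     if k = 0 then (\<sigma> d, 0)
     else if k = 1 then (d, 3)
     else if k = 3 then (\<alpha> d, 1)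
     else (dual_rot D \<alpha> \<sigma> d, 2))"

end

theory Submission imports Defs begin

lemma funpow_in: "(\<forall>x\<in>D. f x \<in> D) \<Longrightarrow> x \<in> D \<Longrightarrow> (f^^n) x \<in> D"
  by (induction n) auto

lemma orb_sub_D: "(\<forall>x\<in>D. f x \<in> D) \<Longrightarrow> x \<in> D \<Longrightarrow> orb f x \<subseteq> D"
proof
  fix y assume "(\<forall>x\<in>D. f x \<in> D)" "x \<in> D" "y \<in> orb f x"
  then show "y \<in> D" unfolding orb_def using funpow_in[of D f x] by auto
qed

lemma orb_self: "x \<in> orb f x"
  unfolding orb_def by (rule range_eqI[of _ _ 0]) simp

lemma orb_step: "f x \<in> orb f x"
  unfolding orb_def by (rule range_eqI[of _ _ 1]) simp

lemma orb_trans: "y \<in> orb f x \<Longrightarrow> orb f y \<subseteq> orb f x"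
proof
  fix z assume "y \<in> orb f x" "z \<in> orb f y"
  then obtain n m where "y = (f^^n) x" "z = (f^^m) y" unfolding orb_def by auto
  then have "z = (f^^(m+n)) x" by (simp add: funpow_add)
  then show "z \<in> orb f x" unfolding orb_def by blast
qed

lemma funpow_fix: "g x = x \<Longrightarrow> (g^^n) x = x"
  by (induction n) auto

lemma funpow_mod: assumes "(f^^p) x = x" shows "(f^^n) x = (f^^(n mod p)) x"
proof -
  have e: "n mod p + p * (n div p) = n" by (rule mod_mult_div_eq)
  have "(f^^(n mod p + p * (n div p))) x = (f^^(n mod p)) ((f^^(p * (n div p))) x)"
    by (simp only: funpow_add comp_apply)
  then have "(f^^n) x = (f^^(n mod p)) ((f^^(p * (n div p))) x)" by (simp only: e)
  also have "(f^^(p * (n div p))) x = x"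
    using funpow_fix[of "f^^p" x "n div p"] assms by (simp add: funpow_mult)
  finally show ?thesis .
qed

lemma orb_period_set: assumes "0 < p" "(f^^p) x = x"
  shows "orb f x = (\<lambda>k. (f^^k) x) ` {..<p}"
proof
  show "orb f x \<subseteq> (\<lambda>k. (f^^k) x) ` {..<p}"
  proof
    fix y assume "y \<in> orb f x"
    then obtain n where "y = (f^^n) x" unfolding orb_def by auto
    then have "y = (f^^(n mod p)) x" using funpow_mod[OF assms(2), of n] by simp
    moreover have "n mod p < p" using assms(1) by simp
    ultimately show "y \<in> (\<lambda>k. (f^^k) x) ` {..<p}" by blast
  qed
qed (auto simp: orb_def)

lemma orb_period_eq: assumes "0 < p" "(f^^p) x = x" "y \<in> orb f x"
  shows "orb f y = orb f x"
proof
  show "orb f y \<subseteq> orb f x" using orb_trans[OF assms(3)] .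
  obtain n where y: "y = (f^^n) x" using assms(3) unfolding orb_def by auto
  have "(f^^(p*n - n)) y = (f^^(p*n - n + n)) x" using y by (simp add: funpow_add)
  also have "p*n - n + n = p * n"
  proof -
    have "n \<le> p * n" using assms(1) by simp
    then show ?thesis by simp
  qed
  also have "(f^^(p*n)) x = x"
    using funpow_fix[of "f^^p" x n] assms by (simp add: funpow_mult)
  finally have "x \<in> orb f y" unfolding orb_def by blast
  then show "orb f x \<subseteq> orb f y" by (rule orb_trans)
qed

lemma bij_period: assumes "finite D" "bij_betw f D D" "x \<in> D"
  shows "\<exists>p>0. (f^^p) x = x"
proof -
  have inD: "\<And>n. (f^^n) x \<in> D"
    using funpow_in[OF _ assms(3)] assms(2) bij_betwE by blast
  have "\<not> inj_on (\<lambda>n. (f^^n) x) {..card D}"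
  proof
    assume "inj_on (\<lambda>n. (f^^n) x) {..card D}"
    then have "card {..card D} \<le> card D"
    proof (rule card_inj_on_le[OF _ _ assms(1)])
      show "(\<lambda>n. (f^^n) x) ` {..card D} \<subseteq> D" using inD by blast
    qed
    then show False by simp
  qed
  then obtain i j where ij: "i \<le> card D" "j \<le> card D" "i \<noteq> j" "(f^^i) x = (f^^j) x"
    unfolding inj_on_def by auto
  obtain a b where ab: "a < b" "(f^^a) x = (f^^b) x"
  proof (cases "i < j")
    case True then show ?thesis using ij(4) that[of i j] by blast
  next
    case False then have "j < i" using ij(3) by simp
    then show ?thesis using ij(4)[symmetric] that[of j i] by blast
  qed
  have "(f^^a) ((f^^(b-a)) x) = (f^^(a + (b-a))) x" by (simp only: funpow_add comp_apply)
  also have "a + (b - a) = b" using ab(1) by simp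
  finally have "(f^^a) ((f^^(b-a)) x) = (f^^b) x" .
  then have eq: "(f^^a) ((f^^(b-a)) x) = (f^^a) x" using ab(2) by (rule trans[OF _ sym])
  have inj: "inj_on (f^^a) D" using bij_betw_funpow[OF assms(2)] bij_betw_def by blast
  have "(f^^(b-a)) x = x" using inj_onD[OF inj eq inD[of "b-a"] assms(3)] .
  moreover have "0 < b - a" using ab(1) by simp
  ultimately show ?thesis by blast
qed

lemma orb_bij_eq: assumes "finite D" "bij_betw f D D" "x \<in> D" "y \<in> orb f x"
  shows "orb f y = orb f x"
proof -
  obtain p where "0 < p" "(f^^p) x = x" using bij_period[OF assms(1-3)] by blast
  then show ?thesis by (rule orb_period_eq[OF _ _ assms(4)])
qed

lemma cells_sum: assumes "finite D" "bij_betw f D D"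
  shows "(\<Sum>c\<in>cells D f. card c) = card D"
proof -
  have cl: "\<forall>x\<in>D. f x \<in> D" using assms(2) bij_betwE by blast
  have U: "\<Union>(cells D f) = D"
  proof
    show "\<Union>(cells D f) \<subseteq> D" unfolding cells_def using orb_sub_D[OF cl] by blast
    show "D \<subseteq> \<Union>(cells D f)"
    proof
      fix x assume "x \<in> D"
      then have "orb f x \<in> cells D f" "x \<in> orb f x" unfolding cells_def by (auto simp: orb_self)
      then show "x \<in> \<Union>(cells D f)" by blast
    qed
  qed
  have "pairwise disjnt (cells D f)"
    unfolding pairwise_def disjnt_def cells_def
  proof (clarify)
    fix x y assume xy: "x \<in> D" "y \<in> D" "orb f x \<noteq> orb f y"
    show "orb f x \<inter> orb f y = {}"
    proof (rule ccontr)
      assume "orb f x \<inter> orb f y \<noteq> {}"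
      then obtain z where z: "z \<in> orb f x" "z \<in> orb f y" by blast
      have "orb f z = orb f x" by (rule orb_bij_eq[OF assms xy(1) z(1)])
      moreover have "orb f z = orb f y" by (rule orb_bij_eq[OF assms xy(2) z(2)])
      ultimately show False using xy(3) by simp
    qed
  qed
  moreover have "\<And>A. A \<in> cells D f \<Longrightarrow> finite A"
  proof -
    fix A assume "A \<in> cells D f"
    then obtain x where "x \<in> D" "A = orb f x" unfolding cells_def by auto
    then show "finite A" using orb_sub_D[OF cl] assms(1) rev_finite_subset by metis
  qed
  ultimately have "card (\<Union>(cells D f)) = sum card (cells D f)"
    by (rule card_Union_disjoint)
  then show ?thesis using U by simp
qed

lemma funpow_inv: "\<forall>x\<in>D. f (g x) = x \<Longrightarrow> \<forall>x\<in>D. g x \<in> D \<Longrightarrow> x \<in> D \<Longrightarrow> (f^^n) ((g^^n) x) = x"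
proof (induction n arbitrary: x)
  case (Suc n)
  have "(f^^Suc n) ((g^^Suc n) x) = (f^^n) (f (g ((g^^n) x)))"
    by (simp only: funpow_Suc_right[where f=f] funpow.simps(2)[where f=g] comp_apply)
  also have "f (g ((g^^n) x)) = (g^^n) x" using Suc.prems(1) funpow_in[OF Suc.prems(2,3), of n] by blast
  finally show ?case using Suc by simp
qed simp

lemma orb_inv_sub: assumes "finite D" "bij_betw f D D" "bij_betw g D D" "\<forall>x\<in>D. f (g x) = x" "x \<in> D"
  shows "orb g x \<subseteq> orb f x"
proof
  fix y assume "y \<in> orb g x"
  then obtain n where y: "y = (g^^n) x" unfolding orb_def by auto
  have gD: "\<forall>x\<in>D. g x \<in> D" using assms(3) bij_betwE by blast
  have yD: "y \<in> D" using y funpow_in[OF gD assms(5)] by simp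
  have "(f^^n) y = x" using y funpow_inv[OF assms(4) gD assms(5)] by simp
  then have "x \<in> orb f y" unfolding orb_def by blast
  then have "orb f x = orb f y" using orb_bij_eq[OF assms(1,2) yD] by simp
  then show "y \<in> orb f x" by (simp add: orb_self)
qed

lemma orb_inv_eq: assumes "finite D" "bij_betw f D D" "bij_betw g D D"
  "\<forall>x\<in>D. f (g x) = x" "\<forall>x\<in>D. g (f x) = x" "x \<in> D"
  shows "orb g x = orb f x"
  by (rule equalityI[OF orb_inv_sub[OF assms(1,2,3,4,6)] orb_inv_sub[OF assms(1,3,2,5,6)]])

lemma card_ge2: assumes "finite D" "\<forall>x\<in>D. f x \<in> D" "d \<in> D" "f d \<noteq> d"
  shows "1 < card (orb f d)"
proof -
  have "finite (orb f d)" using orb_sub_D[OF assms(2,3)] assms(1) finite_subset by blast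
  moreover have "{d, f d} \<subseteq> orb f d" using orb_self orb_step by fast
  ultimately have "card {d, f d} \<le> card (orb f d)" by (rule card_mono)
  then show ?thesis using assms(4) by simp
qed

lemma card_half: assumes "finite D" "inj_on a D" "a ` v \<subseteq> D - v" "v \<subseteq> D"
  shows "2 * card v \<le> card D"
proof -
  have "card (a ` v) = card v" using assms(2,4) by (meson card_image inj_on_subset)
  moreover have "card (a ` v) \<le> card (D - v)" using assms(1,3) by (simp add: card_mono)
  moreover have "card (D - v) = card D - card v" using assms(1,4) by (meson card_Diff_subset finite_subset)
  moreover have "card v \<le> card D" using assms(1,4) by (simp add: card_mono)
  ultimately show ?thesis by linarith
qed

lemma funpow4: "(f^^4) x = f (f (f (f x)))"
  by (simp add: eval_nat_numeral)

lemma img4: "(\<lambda>k. (f^^k) x) ` {..<4::nat} = {x, f x, f (f x), f (f (f x))}"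
proof -
  have "{..<4::nat} = {0,1,2,3}" by auto
  then show ?thesis by (simp add: eval_nat_numeral)
qed

lemma img_tag_eq: "((\<lambda>x. (x, k::nat)) ` A = (\<lambda>x. (x, k)) ` B) = (A = B)"
  by (rule inj_image_eq_iff) (auto simp: inj_def)

lemma img_tag_neq: "k \<noteq> l \<Longrightarrow> a \<in> A \<Longrightarrow> (\<lambda>x. (x, k::nat)) ` A \<noteq> (\<lambda>x. (x, l)) ` B"
  by auto

theorem lemma2p1:
  fixes D :: "'a set" and \<alpha> \<sigma> :: "'a \<Rightarrow> 'a" and r :: nat
  assumes "r \<ge> 2"
    and "newton_graph D \<alpha> \<sigma> r"
  shows "(\<forall>v\<in>cells D \<sigma>. 1 < card v \<and> card v \<le> 2 * r)
       \<and> (\<forall>w\<in>cells D (dual_rot D \<alpha> \<sigma>). 1 < card w \<and> card w \<le> 2 * r)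
       \<and> (\<Sum>v\<in>cells D \<sigma>. card v) = 4 * r
       \<and> (\<Sum>w\<in>cells D (dual_rot D \<alpha> \<sigma>). card w) = 4 * r
       \<and> card (cells (ref_darts D) (face_perm ref_alpha (ref_sigma D \<alpha> \<sigma>))) = 4 * r
       \<and> (\<forall>d\<in>D. \<forall>y\<in>orb (ref_sigma D \<alpha> \<sigma>) (d, 1). \<forall>z\<in>orb (ref_sigma D \<alpha> \<sigma>) (d, 1).
            y \<noteq> z \<longrightarrow> orb (ref_sigma D \<alpha> \<sigma>) (ref_alpha y) \<noteq> orb (ref_sigma D \<alpha> \<sigma>) (ref_alpha z))"
proof -
  from assms(2) have fin: "finite D" and aD: "\<forall>d\<in>D. \<alpha> d \<in> D \<and> \<alpha> (\<alpha> d) = d \<and> \<alpha> d \<noteq> d"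
    and bs: "bij_betw \<sigma> D D" and nl: "\<forall>d\<in>D. \<alpha> d \<notin> orb \<sigma> d"
    and ca: "card (cells D \<alpha>) = 2*r"
    and E: "\<forall>d\<in>D. orb (face_perm \<alpha> \<sigma>) (\<alpha> d) \<noteq> orb (face_perm \<alpha> \<sigma>) d"
    unfolding newton_graph_def torus_map_def no_loops_def E_property_def by blast+
  define \<phi> where "\<phi> = face_perm \<alpha> \<sigma>"
  define \<rho> where "\<rho> = dual_rot D \<alpha> \<sigma>"
  have E': "\<forall>d\<in>D. orb \<phi> (\<alpha> d) \<noteq> orb \<phi> d" using E \<phi>_def by simp
  have ainj: "inj_on \<alpha> D"
  proof (rule inj_onI)
    fix x y assume "x \<in> D" "y \<in> D" "\<alpha> x = \<alpha> y"
    then show "x = y" using aD by metis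
  qed
  have aimg: "\<alpha> ` D = D"
  proof
    show "\<alpha> ` D \<subseteq> D" using aD by auto
    show "D \<subseteq> \<alpha> ` D"
    proof
      fix d assume "d \<in> D" then have "d = \<alpha> (\<alpha> d)" "\<alpha> d \<in> D" using aD by auto
      then show "d \<in> \<alpha> ` D" by blast
    qed
  qed
  have ba: "bij_betw \<alpha> D D" unfolding bij_betw_def using ainj aimg by simp
  have bphi: "bij_betw \<phi> D D" unfolding \<phi>_def face_perm_def using bij_betw_trans[OF ba bs] .
  have rdef: "\<rho> = inv_into D \<phi>" unfolding \<rho>_def dual_rot_def \<phi>_def by simp
  have brho: "bij_betw \<rho> D D" unfolding rdef using bij_betw_inv_into[OF bphi] .
  have rp: "\<forall>x\<in>D. \<rho> (\<phi> x) = x" unfolding rdef using bphi bij_betw_def inv_into_f_f by metis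
  have pr: "\<forall>x\<in>D. \<phi> (\<rho> x) = x" unfolding rdef using bphi bij_betw_imp_surj_on f_inv_into_f by metis
  have orho: "\<forall>x\<in>D. orb \<rho> x = orb \<phi> x" using orb_inv_eq[OF fin bphi brho pr rp] by blast
  have cellsrho: "cells D \<rho> = cells D \<phi>" unfolding cells_def
    by (rule image_cong[OF refl]) (use orho in blast)
  have sD: "\<forall>x\<in>D. \<sigma> x \<in> D" using bs bij_betwE by blast
  have phiD: "\<forall>x\<in>D. \<phi> x \<in> D" using bphi bij_betwE by blast
  have rhoD: "\<forall>x\<in>D. \<rho> x \<in> D" using brho bij_betwE by blast
  have phiv: "\<forall>x\<in>D. \<phi> x = \<sigma> (\<alpha> x)" unfolding \<phi>_def face_perm_def by simp
  have cardD: "card D = 4*r"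
  proof -
    have "\<forall>c\<in>cells D \<alpha>. card c = 2"
    proof
      fix c assume "c \<in> cells D \<alpha>" then obtain d where d: "d\<in>D" "c = orb \<alpha> d" unfolding cells_def by auto
      have "(\<alpha>^^2) d = d" using aD d by (simp add: numeral_2_eq_2)
      then have "orb \<alpha> d = (\<lambda>k. (\<alpha>^^k) d) ` {..<2}" using orb_period_set[of 2 \<alpha> d] by simp
      also have "\<dots> = {d, \<alpha> d}" by (auto simp: numeral_2_eq_2 lessThan_Suc)
      finally show "card c = 2" using d aD by auto
    qed
    then have "(\<Sum>c\<in>cells D \<alpha>. card c) = (\<Sum>c\<in>cells D \<alpha>. 2)" using sum.cong[OF refl, of "cells D \<alpha>" card "\<lambda>_. 2"] by blast
    then have "(\<Sum>c\<in>cells D \<alpha>. card c) = 2 * card (cells D \<alpha>)" by simp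
    then show ?thesis using cells_sum[OF fin ba] ca by simp
  qed
  have P1: "\<forall>v\<in>cells D \<sigma>. 1 < card v \<and> card v \<le> 2*r"
  proof
    fix v assume "v \<in> cells D \<sigma>" then obtain d where d: "d\<in>D" "v = orb \<sigma> d" unfolding cells_def by auto
    have "\<sigma> d \<noteq> d"
    proof
      assume "\<sigma> d = d"
      then have "\<phi> (\<alpha> d) = d" using phiv aD d by simp
      then have "d \<in> orb \<phi> (\<alpha> d)" using orb_step[of \<phi> "\<alpha> d"] by simp
      moreover have "\<alpha> d \<in> D" using aD d by blast
      ultimately have "orb \<phi> d = orb \<phi> (\<alpha> d)" using orb_bij_eq[OF fin bphi] by blast
      then show False using E' d by metis
    qed
    then have "1 < card v" using card_ge2[OF fin sD d(1)] d by simp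
    moreover have "2 * card v \<le> card D"
    proof (rule card_half[OF fin ainj])
      show vD: "v \<subseteq> D" using orb_sub_D[OF sD d(1)] d by simp
      show "\<alpha> ` v \<subseteq> D - v"
      proof
        fix y assume "y \<in> \<alpha> ` v" then obtain x where x: "x \<in> v" "y = \<alpha> x" by auto
        have xD: "x\<in>D" using x vD by auto
        have xin: "x \<in> orb \<sigma> d" using x d by simp
        have "orb \<sigma> x = v" using orb_bij_eq[OF fin bs d(1) xin] d(2) by simp
        then have "y \<notin> v" using nl xD x by auto
        then show "y \<in> D - v" using aD xD x by auto
      qed
    qed
    ultimately show "1 < card v \<and> card v \<le> 2*r" using cardD by simp
  qed
  have P2: "\<forall>w\<in>cells D \<rho>. 1 < card w \<and> card w \<le> 2*r"
  proof
    fix w assume "w \<in> cells D \<rho>" then obtain d where d: "d\<in>D" "w = orb \<phi> d"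
      unfolding cellsrho unfolding cells_def by auto
    have "\<phi> d \<noteq> d"
    proof
      assume "\<phi> d = d"
      then have "\<sigma> (\<alpha> d) = d" using phiv d by simp
      then have "d \<in> orb \<sigma> (\<alpha> d)" using orb_step[of \<sigma> "\<alpha> d"] by simp
      moreover have "\<alpha> d \<in> D" using aD d by blast
      ultimately have "orb \<sigma> d = orb \<sigma> (\<alpha> d)" using orb_bij_eq[OF fin bs] by blast
      then show False using nl d orb_self by metis
    qed
    then have "1 < card w" using card_ge2[OF fin phiD d(1)] d by simp
    moreover have "2 * card w \<le> card D"
    proof (rule card_half[OF fin ainj])
      show vD: "w \<subseteq> D" using orb_sub_D[OF phiD d(1)] d by simp
      show "\<alpha> ` w \<subseteq> D - w"
      proof
        fix y assume "y \<in> \<alpha> ` w" then obtain x where x: "x \<in> w" "y = \<alpha> x" by auto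
        have xD: "x\<in>D" using x vD by auto
        have xin: "x \<in> orb \<phi> d" using x d by simp
        have ox: "orb \<phi> x = w" using orb_bij_eq[OF fin bphi d(1) xin] d(2) by simp
        have "y \<notin> w"
        proof
          assume "y \<in> w"
          then have yin: "y \<in> orb \<phi> d" using d by simp
          have "orb \<phi> y = w" using orb_bij_eq[OF fin bphi d(1) yin] d(2) by simp
          then show False using E' xD x ox by metis
        qed
        then show "y \<in> D - w" using aD xD x by auto
      qed
    qed
    ultimately show "1 < card w \<and> card w \<le> 2*r" using cardD by simp
  qed
  have S1: "(\<Sum>v\<in>cells D \<sigma>. card v) = 4 * r" using cells_sum[OF fin bs] cardD by simp
  have S2: "(\<Sum>v\<in>cells D \<rho>. card v) = 4 * r" using cells_sum[OF fin bphi] cardD cellsrho by simp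
  define RS where "RS = ref_sigma D \<alpha> \<sigma>"
  define PS where "PS = face_perm ref_alpha RS"
  have RS0: "\<And>d. RS (d,0) = (\<sigma> d, 0)" and RS1: "\<And>d. RS (d,1) = (d,3)"
    and RS3: "\<And>d. RS (d,3) = (\<alpha> d, 1)" and RS2: "\<And>d. RS (d,2) = (\<rho> d, 2)"
    by (simp_all add: RS_def ref_sigma_def \<rho>_def)
  have PS0: "\<And>d. PS (d,0) = (d,3)" and PS1: "\<And>d. PS (d,1) = (\<sigma> d,0)"
    and PS2: "\<And>d. PS (d,2) = (\<alpha> d,1)" and PS3: "\<And>d. PS (d,3) = (\<rho> d,2)"
  proof -
    have RA: "\<And>d. ref_alpha (d,0) = (d,1)" "\<And>d. ref_alpha (d,1) = (d,0)"
      "\<And>d. ref_alpha (d,2) = (d,3)" "\<And>d. ref_alpha (d,3) = (d,2)"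
      by (simp_all add: ref_alpha_def)
    show "\<And>d. PS (d,0) = (d,3)" "\<And>d. PS (d,1) = (\<sigma> d,0)"
      "\<And>d. PS (d,2) = (\<alpha> d,1)" "\<And>d. PS (d,3) = (\<rho> d,2)"
      by (simp_all only: PS_def face_perm_def comp_apply RA RS0 RS1 RS2 RS3)
  qed
  have per: "\<And>d. d \<in> D \<Longrightarrow> (PS^^4) (d,0) = (d,0)"
  proof -
    fix d assume d: "d \<in> D"
    have "(PS^^4) (d,0) = (\<sigma> (\<alpha> (\<rho> d)), 0)"
      by (simp only: funpow4 PS0 PS1 PS2 PS3)
    also have "\<sigma> (\<alpha> (\<rho> d)) = d" using pr phiv rhoD d by metis
    finally show "(PS^^4) (d,0) = (d,0)" .
  qed
  have O: "\<And>d. d \<in> D \<Longrightarrow> orb PS (d,0) = {(d,0),(d,3),(\<rho> d,2),(\<alpha> (\<rho> d),1)}"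
  proof -
    fix d assume d: "d \<in> D"
    have "orb PS (d,0) = (\<lambda>k. (PS^^k) (d,0)) ` {..<4}" using orb_period_set[of 4 PS "(d,0)"] per[OF d] by simp
    also have "\<dots> = {(d,0),(d,3),(\<rho> d,2),(\<alpha> (\<rho> d),1)}"
      by (simp only: img4 PS0 PS1 PS2 PS3)
    finally show "orb PS (d,0) = {(d,0),(d,3),(\<rho> d,2),(\<alpha> (\<rho> d),1)}" .
  qed
  have Oeq: "\<And>d x. d \<in> D \<Longrightarrow> x \<in> orb PS (d,0) \<Longrightarrow> orb PS x = orb PS (d,0)"
  proof -
    fix d x assume d: "d \<in> D" and x: "x \<in> orb PS (d,0)"
    show "orb PS x = orb PS (d,0)" by (rule orb_period_eq[OF _ per[OF d] x]) simp
  qed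
  have cellsR: "cells (ref_darts D) PS = (\<lambda>d. orb PS (d,0)) ` D"
  proof
    show "(\<lambda>d. orb PS (d,0)) ` D \<subseteq> cells (ref_darts D) PS"
      unfolding cells_def ref_darts_def by auto
    show "cells (ref_darts D) PS \<subseteq> (\<lambda>d. orb PS (d,0)) ` D"
    proof
      fix c assume "c \<in> cells (ref_darts D) PS"
      then obtain d k where dk: "d \<in> D" "k \<in> {0,1,2,3}" "c = orb PS (d,k)"
        unfolding cells_def ref_darts_def by auto
      have "\<exists>e\<in>D. (d,k) \<in> orb PS (e,0)"
      proof -
        consider "k = 0" | "k = 1" | "k = 2" | "k = 3" using dk(2) by auto
        then show ?thesis
        proof cases
          case 1
          have "(d,k) \<in> orb PS (d,0)" using 1 orb_self[of "(d,0)" PS] by simp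
          then show ?thesis using dk(1) by blast
        next
          case 2
          have e: "\<phi> (\<alpha> d) \<in> D" using phiD aD dk(1) by blast
          have "\<rho> (\<phi> (\<alpha> d)) = \<alpha> d" using rp aD dk(1) by blast
          then have "(d,k) \<in> orb PS (\<phi> (\<alpha> d), 0)" using O[OF e] 2 aD dk(1) by simp
          then show ?thesis using e by blast
        next
          case 3
          have e: "\<phi> d \<in> D" using phiD dk(1) by blast
          have "\<rho> (\<phi> d) = d" using rp dk(1) by blast
          then have "(d,k) \<in> orb PS (\<phi> d, 0)" using O[OF e] 3 by simp
          then show ?thesis using e by blast
        next
          case 4
          have "(d,k) \<in> orb PS (d,0)" using 4 O[OF dk(1)] by simp
          then show ?thesis using dk(1) by blast
        qed
      qed
      then obtain e where e: "e \<in> D" "(d,k) \<in> orb PS (e,0)" by blast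
      have "c = orb PS (e,0)" using Oeq[OF e] dk(3) by simp
      then show "c \<in> (\<lambda>d. orb PS (d,0)) ` D" using e(1) by blast
    qed
  qed
  have "inj_on (\<lambda>d. orb PS (d,0)) D"
  proof (rule inj_onI)
    fix d e assume de: "d \<in> D" "e \<in> D" "orb PS (d,0) = orb PS (e,0)"
    then have "(d,0) \<in> orb PS (e,0)" using orb_self[of "(d,0)" PS] by simp
    then show "d = e" using O[OF de(2)] by auto
  qed
  then have P5: "card (cells (ref_darts D) PS) = 4 * r" using cellsR card_image cardD by metis
  have T0: "\<And>e n. (RS^^n) (e,0) = ((\<sigma>^^n) e, 0)"
  proof -
    fix e n show "(RS^^n) (e,0) = ((\<sigma>^^n) e, 0)" by (induction n) (simp_all add: RS0)
  qed
  have T2: "\<And>e n. (RS^^n) (e,2) = ((\<rho>^^n) e, 2)"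
  proof -
    fix e n show "(RS^^n) (e,2) = ((\<rho>^^n) e, 2)" by (induction n) (simp_all add: RS2)
  qed
  have O0: "\<And>e. orb RS (e,0) = (\<lambda>x. (x,0)) ` orb \<sigma> e"
    unfolding orb_def T0 by (simp add: image_image)
  have O2: "\<And>e. orb RS (e,2) = (\<lambda>x. (x,2)) ` orb \<rho> e"
    unfolding orb_def T2 by (simp add: image_image)
  have P6: "\<forall>d\<in>D. \<forall>y\<in>orb RS (d, 1). \<forall>z\<in>orb RS (d, 1).
            y \<noteq> z \<longrightarrow> orb RS (ref_alpha y) \<noteq> orb RS (ref_alpha z)"
  proof (intro ballI impI)
    fix d y z assume d: "d \<in> D" and yz: "y \<in> orb RS (d,1)" "z \<in> orb RS (d,1)" "y \<noteq> z"
    have "(RS^^4) (d,1) = (\<alpha> (\<alpha> d), 1)" by (simp only: funpow4 RS1 RS3)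
    then have "(RS^^4) (d,1) = (d,1)" using aD d by simp
    then have "orb RS (d,1) = (\<lambda>k. (RS^^k) (d,1)) ` {..<4}" using orb_period_set[of 4 RS "(d,1)"] by simp
    also have "\<dots> = {(d,1),(d,3),(\<alpha> d,1),(\<alpha> d,3)}"
      by (simp only: img4 RS1 RS3)
    finally have OS: "orb RS (d,1) = {(d,1),(d,3),(\<alpha> d,1),(\<alpha> d,3)}" .
    have N0: "orb \<sigma> d \<noteq> orb \<sigma> (\<alpha> d)" using nl d orb_self by metis
    have "orb \<rho> d = orb \<phi> d" "orb \<rho> (\<alpha> d) = orb \<phi> (\<alpha> d)" using orho d aD by auto
    then have N2: "orb \<rho> d \<noteq> orb \<rho> (\<alpha> d)" using E' d by metis
    have RA: "ref_alpha (d,1) = (d,0)" "ref_alpha (d,3) = (d,2)"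
      "ref_alpha (\<alpha> d,1) = (\<alpha> d,0)" "ref_alpha (\<alpha> d,3) = (\<alpha> d,2)"
      by (simp_all add: ref_alpha_def)
    define A1 where "A1 = orb RS (d,0)"
    define A2 where "A2 = orb RS (d,2)"
    define A3 where "A3 = orb RS (\<alpha> d,0)"
    define A4 where "A4 = orb RS (\<alpha> d,2)"
    have d13: "A1 \<noteq> A3" unfolding A1_def A3_def O0 img_tag_eq using N0 .
    have d24: "A2 \<noteq> A4" unfolding A2_def A4_def O2 img_tag_eq using N2 .
    have d12: "A1 \<noteq> A2" unfolding A1_def A2_def O0 O2 by (rule img_tag_neq[OF _ orb_self]) simp
    have d14: "A1 \<noteq> A4" unfolding A1_def A4_def O0 O2 by (rule img_tag_neq[OF _ orb_self]) simp
    have d32: "A3 \<noteq> A2" unfolding A3_def A2_def O0 O2 by (rule img_tag_neq[OF _ orb_self]) simp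
    have d34: "A3 \<noteq> A4" unfolding A3_def A4_def O0 O2 by (rule img_tag_neq[OF _ orb_self]) simp
    have y: "y = (d,1) \<or> y = (d,3) \<or> y = (\<alpha> d,1) \<or> y = (\<alpha> d,3)" using yz(1) OS by blast
    have z: "z = (d,1) \<or> z = (d,3) \<or> z = (\<alpha> d,1) \<or> z = (\<alpha> d,3)" using yz(2) OS by blast
    show "orb RS (ref_alpha y) \<noteq> orb RS (ref_alpha z)"
      using y z yz(3) d13 d24 d12 d14 d32 d34
      unfolding A1_def A2_def A3_def A4_def
      by (elim disjE) (simp_all only: RA, simp_all)
  qed
  show ?thesis unfolding \<rho>_def[symmetric] RS_def[symmetric] PS_def[symmetric]
    by (intro conjI P1 P2 S1 S2 P5 P6)
qed

end
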